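(* Let $q>1$ and $\hbar,m>0$. For $N\ge0$ let $$H_N^{(s)}(x,it;q)=\sum_{k=0}^{\lfloor N/2\rfloor}\frac{\big(\frac{i\hbar t}{2m}\big)^k[N]_q!\,x^{N-2k}}{[N-2k]_q!\,k!}.$$ Then for real $x,t,p$, $$e^{-\frac{i}{\hbar}\frac{p^2}{2m}t}\,e_q\Big(\frac{i}{\hbar}px\Big)=\sum_{N=0}^\infty\Big(\frac{i}{\hbar}\Big)^N\frac{p^N}{[N]_q!}H_N^{(s)}(x,it;q),$$ and each $\psi(x,t)=H_N^{(s)}(x,it;q)$ solves the $q$-Schrödinger equation $\big(\partial_t-\frac{i\hbar}{2m}D_x^2\big)\psi(x,t)=0$ for $x\ne0$.
   Context: For $n\ge 0$ let $[n]_q=\frac{q^n-1}{q-1}$, $[0]_q!=1$, $[n]_q!=[1]_q\cdots[n]_q$, and $e_q(z)=\sum_{n\ge0}z^n/[n]_q!$ (entire for $q>1$). $D_x$ is the $q$-derivative in $x$ at fixed $t$: $D_xf(x,t)=\frac{f(qx,t)-f(x,t)}{(q-1)x}$, $D_x^2=D_x\circ D_x$. *)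

theory Defs
  imports Complex_Main
begin

definition qnum :: "real \<Rightarrow> nat \<Rightarrow> real" where
  "qnum q n = (q ^ n - 1) / (q - 1)"

definition qfact :: "real \<Rightarrow> nat \<Rightarrow> real" where
  "qfact q n = (\<Prod>j=1..n. qnum q j)"

definition qexp :: "real \<Rightarrow> complex \<Rightarrow> complex" where
  "qexp q z = (\<Sum>n. z ^ n / complex_of_real (qfact q n))"

definition Dq :: "real \<Rightarrow> (real \<Rightarrow> real \<Rightarrow> complex) \<Rightarrow> real \<Rightarrow> real \<Rightarrow> complex" where
  "Dq q f x t = (f (q * x) t - f x t) / complex_of_real ((q - 1) * x)"

text \<open>Hs q hbar m N x t stands for H_N^(s)(x, it; q)\<close>
definition Hs :: "real \<Rightarrow> real \<Rightarrow> real \<Rightarrow> nat \<Rightarrow> real \<Rightarrow> real \<Rightarrow> complex" where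
  "Hs q hbar m N x t = (\<Sum>k=0..N div 2.
      (\<i> * complex_of_real (hbar * t / (2 * m))) ^ k * complex_of_real (qfact q N) * complex_of_real (x ^ (N - 2 * k))
      / complex_of_real (qfact q (N - 2 * k) * fact k))"

end

theory Submission
  imports Defs
begin

lemma qnum_sum: "q \<noteq> 1 \<Longrightarrow> qnum q n = (\<Sum>i<n. q^i)"
  by (simp add: qnum_def geometric_sum)

lemma qnum_ge: assumes "q > 1" shows "real n \<le> qnum q n"
proof -
  have "real n = (\<Sum>i<n. 1::real)" by simp
  also have "\<dots> \<le> (\<Sum>i<n. q^i)" by (rule sum_mono) (use assms in \<open>simp add: one_le_power\<close>)
  finally show ?thesis using qnum_sum[of q n] assms by simp
qed

lemma qfact_Suc: "qfact q (Suc n) = qnum q (Suc n) * qfact q n"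
  by (simp add: qfact_def prod.nat_ivl_Suc')

lemma qfact_0: "qfact q 0 = 1"
  by (simp add: qfact_def)

lemma fact_le_qfact: assumes "q > 1" shows "fact n \<le> qfact q n"
proof (induction n)
  case 0 then show ?case by (simp add: qfact_0)
next
  case (Suc n)
  have "fact (Suc n) = real (Suc n) * fact n" by simp
  also have "\<dots> \<le> qnum q (Suc n) * qfact q n"
    by (rule mult_mono) (use Suc qnum_ge[OF assms, of "Suc n"] in auto)
  finally show ?case by (simp add: qfact_Suc)
qed

lemma qfact_pos: "q > 1 \<Longrightarrow> qfact q n > 0"
  using fact_le_qfact[of q n] by (meson fact_gt_zero less_le_trans)

lemma dq_pow: "x \<noteq> 0 \<Longrightarrow> q \<noteq> 1 \<Longrightarrow> ((q*x)^n - x^n) / ((q-1)*x) = qnum q n * x^(n-1)"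
  by (cases n) (simp_all add: qnum_def field_simps power_mult_distrib)

lemma Dq_poly:
  fixes c :: "nat \<Rightarrow> complex" and n :: "nat \<Rightarrow> nat"
  assumes x: "x \<noteq> 0" and q: "q \<noteq> 1"
    and f1: "f x t = (\<Sum>k\<in>K. c k * of_real (x ^ n k))"
    and f2: "f (q*x) t = (\<Sum>k\<in>K. c k * of_real ((q*x) ^ n k))"
  shows "Dq q f x t = (\<Sum>k\<in>K. c k * of_real (qnum q (n k) * x ^ (n k - 1)))"
proof -
  have "Dq q f x t = (\<Sum>k\<in>K. c k * of_real ((q*x) ^ n k) - c k * of_real (x ^ n k)) / of_real ((q-1)*x)"
    unfolding Dq_def f1 f2 by (simp add: sum_subtractf)
  also have "\<dots> = (\<Sum>k\<in>K. (c k * of_real ((q*x) ^ n k) - c k * of_real (x ^ n k)) / of_real ((q-1)*x))"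
    by (simp add: sum_divide_distrib)
  also have "\<dots> = (\<Sum>k\<in>K. c k * of_real (qnum q (n k) * x ^ (n k - 1)))"
  proof (rule sum.cong[OF refl])
    fix k
    have "(c k * of_real ((q*x) ^ n k) - c k * of_real (x ^ n k)) / of_real ((q-1)*x)
        = c k * of_real (((q*x) ^ n k - x ^ n k) / ((q-1)*x))"
      by (simp add: algebra_simps of_real_diff)
    also have "\<dots> = c k * of_real (qnum q (n k) * x ^ (n k - 1))"
      using dq_pow[OF x q] by simp
    finally show "(c k * of_real ((q*x) ^ n k) - c k * of_real (x ^ n k)) / of_real ((q-1)*x)
        = c k * of_real (qnum q (n k) * x ^ (n k - 1))" .
  qed
  finally show ?thesis .
qed

definition rr :: "real \<Rightarrow> nat \<Rightarrow> nat \<Rightarrow> real" where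
  "rr q N k = qfact q N / (qfact q (N - 2*k) * fact k)"

lemma Hs_alt: "Hs q hbar m N x t = (\<Sum>k\<in>{0..N div 2}.
   ((\<i> * complex_of_real (hbar / (2 * m)) * of_real t) ^ k * of_real (rr q N k)) * of_real (x ^ (N - 2*k)))"
  unfolding Hs_def rr_def
  by (rule sum.cong[OF refl]) (simp add: field_simps)

lemma rr_step:
  assumes q: "q > 1" and j: "2*j+2 \<le> N"
  shows "real (Suc j) * rr q N (Suc j) = rr q N j * qnum q (N - 2*j) * qnum q (N - 2*j - 1)"
proof -
  define n where "n = N - 2*j - 2"
  have n: "N - 2*j = Suc (Suc n)" using j unfolding n_def by arith
  have n2: "N - 2 * Suc j = n" using n by simp
  have n1: "N - 2*j - 1 = Suc n" using n by simp
  have pos: "qfact q n > 0" using qfact_pos[OF q] by simp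
  have p1: "qnum q (Suc n) > 0" "qnum q (Suc (Suc n)) > 0"
    using qnum_ge[OF q, of "Suc n"] qnum_ge[OF q, of "Suc (Suc n)"] by auto
  show ?thesis unfolding rr_def n n1 n2
    using pos p1 by (simp add: qfact_Suc field_simps del: of_nat_Suc fact_Suc) (simp add: fact_Suc del: of_nat_Suc)
qed

lemma qnum_0[simp]: "qnum q 0 = 0" by (simp add: qnum_def)

lemma reindex_id:
  fixes A :: complex and x q :: real
  assumes q: "q > 1"
  shows "(\<Sum>k\<in>{0..N div 2}. of_nat k * A^(k-1) * of_real (rr q N k * x^(N-2*k)))
    = (\<Sum>k\<in>{0..N div 2}. (A^k * of_real (rr q N k) * of_real (qnum q (N-2*k))) * of_real (qnum q (N-2*k-1) * x^(N-2*k-1-1)))"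
proof (cases "N div 2")
  case 0
  then have "N = 0 \<or> N = 1" by arith
  then show ?thesis using 0 by auto
next
  case (Suc M)
  define g where "g k = of_nat k * A^(k-1) * of_real (rr q N k * x^(N-2*k))" for k
  define h where "h k = (A^k * of_real (rr q N k) * of_real (qnum q (N-2*k))) * of_real (qnum q (N-2*k-1) * x^(N-2*k-1-1))" for k
  have "(\<Sum>k\<in>{0..N div 2}. g k) = g 0 + (\<Sum>j\<le>M. g (Suc j))"
    unfolding Suc atLeast0AtMost by (rule sum.atMost_Suc_shift)
  also have "\<dots> = (\<Sum>j\<le>M. h j)"
  proof -
    have "g (Suc j) = h j" if "j \<le> M" for j
    proof -
      have j: "2*j+2 \<le> N" using that Suc by arith
      have e: "N - 2*j - 1 - 1 = N - 2 * Suc j" by arith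
      have "of_nat (Suc j) * complex_of_real (rr q N (Suc j)) = of_real (real (Suc j) * rr q N (Suc j))"
        by simp
      also have "\<dots> = of_real (rr q N j) * of_real (qnum q (N - 2*j)) * of_real (qnum q (N - 2*j - 1))"
        unfolding rr_step[OF q j] by simp
      finally have *: "of_nat (Suc j) * complex_of_real (rr q N (Suc j)) = \<dots>" .
      have "g (Suc j) = A^j * (of_nat (Suc j) * complex_of_real (rr q N (Suc j))) * of_real (x^(N - 2 * Suc j))"
        unfolding g_def by (simp only: of_real_mult) (simp add: ac_simps del: of_nat_Suc)
      also have "\<dots> = h j" unfolding * h_def e by (simp add: ac_simps)
      finally show ?thesis .
    qed
    moreover have "g 0 = 0" by (simp add: g_def)
    ultimately show ?thesis by simp
  qed
  also have "\<dots> = (\<Sum>j\<le>Suc M. h j)"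
  proof -
    have "N - 2 * Suc M = 0 \<or> N - 2 * Suc M - 1 = 0" using Suc by arith
    then have "h (Suc M) = 0" unfolding h_def by auto
    then show ?thesis by simp
  qed
  also have "\<dots> = (\<Sum>k\<in>{0..N div 2}. h k)" unfolding Suc atLeast0AtMost ..
  finally show ?thesis unfolding g_def h_def .
qed

lemma part2:
  assumes q: "q > 1" and x: "x \<noteq> 0"
  shows "((\<lambda>s. Hs q hbar m N x s) has_vector_derivative
               (\<i> * complex_of_real (hbar / (2 * m))) * Dq q (Dq q (Hs q hbar m N)) x t) (at t)"
proof -
  define B where "B = \<i> * complex_of_real (hbar / (2 * m))"
  define K where "K = {0..N div 2}"
  define C where "C k = (B * of_real t)^k * of_real (rr q N k)" for k
  have q1: "q \<noteq> 1" using q by simp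
  have D1: "Dq q (Hs q hbar m N) y t = (\<Sum>k\<in>K. (C k * of_real (qnum q (N-2*k))) * of_real (y^(N-2*k-1)))"
    if y: "y \<noteq> 0" for y
  proof -
    have "Dq q (Hs q hbar m N) y t = (\<Sum>k\<in>K. C k * of_real (qnum q (N-2*k) * y^(N-2*k-1)))"
      by (rule Dq_poly[OF y q1]) (simp_all add: Hs_alt C_def K_def B_def)
    then show ?thesis by (simp add: mult.assoc)
  qed
  have D2: "Dq q (Dq q (Hs q hbar m N)) x t = (\<Sum>k\<in>K. (C k * of_real (qnum q (N-2*k))) * of_real (qnum q (N-2*k-1) * x^(N-2*k-1-1)))"
    by (rule Dq_poly[OF x q1]) (use D1[of x] D1[of "q*x"] x q in simp_all)
  define E where "E k = complex_of_real (rr q N k * x^(N-2*k))" for k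
  define F where "F z = (\<Sum>k\<in>K. (B*z)^k * E k)" for z
  have HF: "(\<lambda>s. Hs q hbar m N x s) = (\<lambda>s. F (of_real s))"
    by (rule ext) (simp add: F_def Hs_alt K_def E_def B_def ac_simps)
  have dF: "(F has_field_derivative (\<Sum>k\<in>K. of_nat k * (B * of_real t)^(k-1) * B * E k)) (at (of_real t))"
    unfolding F_def
    by (rule DERIV_sum) (auto intro!: derivative_eq_intros simp: ac_simps)
  have eq: "(\<Sum>k\<in>K. of_nat k * (B * of_real t)^(k-1) * B * E k) = B * Dq q (Dq q (Hs q hbar m N)) x t"
  proof -
    have "(\<Sum>k\<in>K. of_nat k * (B * of_real t)^(k-1) * B * E k)
        = B * (\<Sum>k\<in>K. of_nat k * (B * of_real t)^(k-1) * E k)"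
      by (simp add: sum_distrib_left ac_simps)
    also have "\<dots> = B * Dq q (Dq q (Hs q hbar m N)) x t"
      unfolding D2 C_def E_def K_def reindex_id[OF q] by simp
    finally show ?thesis .
  qed
  show ?thesis unfolding HF B_def[symmetric] eq[symmetric]
    by (rule has_vector_derivative_real_field[OF dF])
qed

lemma qexp_summable:
  assumes q: "q > 1"
  shows "summable (\<lambda>n. norm (y ^ n / complex_of_real (qfact q n)))"
proof (rule summable_comparison_test)
  show "summable (\<lambda>n. inverse (fact n) * (norm y) ^ n)" by (rule summable_exp)
  show "\<exists>N. \<forall>n\<ge>N. norm (norm (y ^ n / complex_of_real (qfact q n))) \<le> inverse (fact n) * norm y ^ n"
  proof (intro exI allI impI)
    fix n :: nat
    have p: "qfact q n > 0" using qfact_pos[OF q] .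
    have "norm (norm (y ^ n / complex_of_real (qfact q n))) = norm y ^ n / qfact q n"
      using p by (simp add: norm_divide norm_power)
    also have "\<dots> \<le> norm y ^ n / fact n"
      by (rule divide_left_mono) (use fact_le_qfact[OF q, of n] p in auto)
    finally show "norm (norm (y ^ n / complex_of_real (qfact q n))) \<le> inverse (fact n) * norm y ^ n"
      by (simp add: divide_inverse mult.commute)
  qed
qed

lemma even_series:
  fixes e :: "nat \<Rightarrow> 'a::real_normed_vector"
  defines "a \<equiv> (\<lambda>n. if even n then e (n div 2) else 0)"
  shows "e sums s \<Longrightarrow> a sums s" and "summable (\<lambda>n. norm (e n)) \<Longrightarrow> summable (\<lambda>n. norm (a n))"
proof -
  have sm: "strict_mono (\<lambda>k::nat. 2*k)" by (rule strict_monoI) simp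
  have z: "n \<notin> range (\<lambda>k::nat. 2*k) \<Longrightarrow> odd n" for n by (auto elim: evenE)
  assume "e sums s"
  moreover have "(\<lambda>k. a (2*k)) = e" by (simp add: a_def)
  ultimately show "a sums s" using sums_mono_reindex[OF sm, of a s] z by (auto simp: a_def)
next
  have sm: "strict_mono (\<lambda>k::nat. 2*k)" by (rule strict_monoI) simp
  have z: "n \<notin> range (\<lambda>k::nat. 2*k) \<Longrightarrow> odd n" for n by (auto elim: evenE)
  assume "summable (\<lambda>n. norm (e n))"
  moreover have "(\<lambda>k. norm (a (2*k))) = (\<lambda>n. norm (e n))" by (simp add: a_def)
  ultimately show "summable (\<lambda>n. norm (a n))"
    using summable_mono_reindex[OF sm, of "\<lambda>n. norm (a n)"] z by (auto simp: a_def)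
qed

lemma even_cauchy_sum:
  fixes e b :: "nat \<Rightarrow> complex"
  shows "(\<Sum>i\<le>N. (if even i then e (i div 2) else 0) * b (N - i)) = (\<Sum>k\<le>N div 2. e k * b (N - 2*k))"
proof -
  have "(\<Sum>i\<le>N. (if even i then e (i div 2) else 0) * b (N - i))
      = (\<Sum>i\<le>N. if even i then e (i div 2) * b (N - i) else 0)"
    by (rule sum.cong) auto
  also have "\<dots> = (\<Sum>i\<in>{i\<in>{..N}. even i}. e (i div 2) * b (N - i))"
    by (rule sum.inter_filter[symmetric]) simp
  also have "{i\<in>{..N}. even i} = (\<lambda>k. 2*k) ` {..N div 2}"
    by (auto elim!: evenE)
  also have "(\<Sum>i\<in>(\<lambda>k. 2*k) ` {..N div 2}. e (i div 2) * b (N - i)) = (\<Sum>k\<le>N div 2. e k * b (N - 2*k))"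
    by (subst sum.reindex) (auto simp: inj_on_def)
  finally show ?thesis .
qed

lemma part1:
  fixes q hbar m :: real
  assumes q: "q > 1" and hb: "hbar > 0" and mm: "m > 0"
  shows "(\<lambda>N. (\<i> / complex_of_real hbar) ^ N * complex_of_real (p ^ N / qfact q N) * Hs q hbar m N x t)
            sums (exp (- (\<i> / complex_of_real hbar) * complex_of_real (p\<^sup>2 / (2 * m)) * complex_of_real t)
                  * qexp q ((\<i> / complex_of_real hbar) * complex_of_real (p * x)))"
proof -
  define z where "z = \<i> / complex_of_real hbar"
  define u where "u = z * of_real p"
  define A where "A = \<i> * complex_of_real (hbar * t / (2 * m))"
  define w where "w = - z * complex_of_real (p\<^sup>2 / (2 * m)) * complex_of_real t"
  have hw: "w = A * u^2"
    unfolding w_def A_def u_def z_def using hb mm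
    by (simp add: field_simps power2_eq_square)
  define e where "e k = w^k /\<^sub>R fact k" for k
  define a where "a n = (if even n then e (n div 2) else 0)" for n
  define b where "b n = (u * of_real x)^n / complex_of_real (qfact q n)" for n
  have asum: "a sums exp w"
    unfolding a_def by (rule even_series(1)) (simp add: e_def exp_converges)
  have anorm: "summable (\<lambda>n. norm (a n))"
    unfolding a_def by (rule even_series(2)) (use summable_norm_exp[of w] in \<open>simp add: e_def\<close>)
  have bnorm: "summable (\<lambda>n. norm (b n))"
    unfolding b_def by (rule qexp_summable[OF q])
  have bsum: "suminf b = qexp q (z * complex_of_real (p * x))"
    unfolding qexp_def b_def u_def by (simp add: mult.assoc)
  have C: "(\<lambda>N. \<Sum>i\<le>N. a i * b (N - i)) sums (exp w * qexp q (z * complex_of_real (p * x)))"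
    using Cauchy_product_sums[OF anorm bnorm] asum bsum by (simp add: sums_iff)
  have trm: "(\<Sum>i\<le>N. a i * b (N - i)) = z ^ N * complex_of_real (p ^ N / qfact q N) * Hs q hbar m N x t" for N
  proof -
    have "(\<Sum>i\<le>N. a i * b (N - i)) = (\<Sum>k\<le>N div 2. e k * b (N - 2*k))"
      unfolding a_def by (rule even_cauchy_sum)
    also have "\<dots> = z ^ N * complex_of_real (p ^ N / qfact q N) * Hs q hbar m N x t"
      unfolding Hs_def atLeast0AtMost sum_distrib_left
    proof (rule sum.cong[OF refl])
      fix k assume "k \<in> {..N div 2}"
      then have kN: "2*k \<le> N" by auto
      define j where "j = N - 2*k"
      have N: "N = 2*k + j" using kN unfolding j_def by arith
      have j: "N - 2*k = j" using N by simp
      have pq: "qfact q j \<noteq> 0" "qfact q N \<noteq> 0" using qfact_pos[OF q, of j] qfact_pos[OF q, of N] by auto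
      have uN: "u^(2*k) * u^j = z^N * of_real p ^ N"
        unfolding N u_def by (simp add: power_add power_mult_distrib)
      have u2: "(u^2)^k = u^(2*k)" by (simp add: power_mult)
      have "e k * b (N - 2*k) = A^k * (u^(2*k) * u^j) * of_real x ^ j / (of_real (fact k) * of_real (qfact q j))"
        unfolding e_def b_def j hw using u2 by (simp add: scaleR_conv_of_real power_mult_distrib field_simps)
      also have "\<dots> = z ^ N * complex_of_real (p ^ N / qfact q N) *
          ((\<i> * complex_of_real (hbar * t / (2 * m))) ^ k * complex_of_real (qfact q N) *
           complex_of_real (x ^ (N - 2 * k)) / complex_of_real (qfact q (N - 2 * k) * fact k))"
        unfolding uN j A_def using pq by (simp add: field_simps)
      finally show "e k * b (N - 2*k) = \<dots>" .
    qed
    finally show ?thesis .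
  qed
  show ?thesis using C unfolding trm w_def z_def .
qed

theorem mainTheorem13:
  fixes q hbar m :: real
  assumes "q > 1" and "hbar > 0" and "m > 0"
  shows "(\<forall>x t p :: real.
            (\<lambda>N. (\<i> / complex_of_real hbar) ^ N * complex_of_real (p ^ N / qfact q N) * Hs q hbar m N x t)
            sums (exp (- (\<i> / complex_of_real hbar) * complex_of_real (p\<^sup>2 / (2 * m)) * complex_of_real t)
                  * qexp q ((\<i> / complex_of_real hbar) * complex_of_real (p * x))))
       \<and> (\<forall>N::nat. \<forall>x t :: real. x \<noteq> 0 \<longrightarrow>
            ((\<lambda>s. Hs q hbar m N x s) has_vector_derivative
               (\<i> * complex_of_real (hbar / (2 * m))) * Dq q (Dq q (Hs q hbar m N)) x t) (at t))"
  using part1[OF assms] part2[OF assms(1)] by blast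

end
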